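(* For every $n\ge1$ there is a general ordinal setting with $n$ agents and $m=n+1$ outcomes and a preference profile on which every outcome has rank-approximation factor at least $\min\{n,m-1\}$; consequently no deterministic mechanism for general ordinal settings can have rank-approximation factor better than $\min\{n,m-1\}$.
   Context: General ordinal setting: $n$ agents, $m$ outcomes; each agent has a strict total order $\succ_j$ on the outcomes (any strict order allowed). $\mathrm{rank}_i(o;\succ)$ is the number of agents having $o$ among their top $i$ outcomes; $\mathrm{maxrank}_i(\succ)=\max_o\mathrm{rank}_i(o;\succ)$. An outcome $o$ has rank-approximation factor $\alpha$ on $\succ$ if $\mathrm{rank}_i(o;\succ)\ge\mathrm{maxrank}_i(\succ)/\alpha$ for all $i\in[m]$; a deterministic mechanism has factor $\alpha$ if its output has factor $\alpha$ on every profile. *)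

theory Defs
  imports Complex_Main
begin

text \<open>General ordinal setting: agents are 0..<n, outcomes are 0..<m.
A preference profile assigns to each agent j a list (its strict order,
most preferred first) which is a permutation of the outcomes.\<close>

definition valid_profile :: "nat \<Rightarrow> nat \<Rightarrow> (nat \<Rightarrow> nat list) \<Rightarrow> bool" where
  "valid_profile n m P \<longleftrightarrow>
     (\<forall>j<n. distinct (P j) \<and> set (P j) = {0..<m})"

definition rank :: "nat \<Rightarrow> (nat \<Rightarrow> nat list) \<Rightarrow> nat \<Rightarrow> nat \<Rightarrow> nat" where
  "rank n P i x = card {j \<in> {0..<n}. x \<in> set (take i (P j))}"

definition maxrank :: "nat \<Rightarrow> nat \<Rightarrow> (nat \<Rightarrow> nat list) \<Rightarrow> nat \<Rightarrow> nat" where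
  "maxrank n m P i = Max ((\<lambda>x. rank n P i x) ` {0..<m})"

definition has_factor :: "nat \<Rightarrow> nat \<Rightarrow> (nat \<Rightarrow> nat list) \<Rightarrow> nat \<Rightarrow> real \<Rightarrow> bool" where
  "has_factor n m P x \<alpha> \<longleftrightarrow>
     (\<forall>i\<in>{1..m}. real (rank n P i x) \<ge> real (maxrank n m P i) / \<alpha>)"

definition mech_has_factor :: "nat \<Rightarrow> nat \<Rightarrow> ((nat \<Rightarrow> nat list) \<Rightarrow> nat) \<Rightarrow> real \<Rightarrow> bool" where
  "mech_has_factor n m M \<alpha> \<longleftrightarrow>
     (\<forall>P. valid_profile n m P \<longrightarrow> has_factor n m P (M P) \<alpha>)"

end

theory Submission
  imports Defs
begin

definition PP :: "nat \<Rightarrow> nat \<Rightarrow> nat list" where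
  "PP n j = [j, n] @ filter (\<lambda>k. k \<noteq> j) [0..<n]"

lemma PP_valid: "valid_profile n (n+1) (PP n)"
  unfolding valid_profile_def PP_def by auto

lemma take1: "take 1 (PP n j) = [j]" "take (Suc 0) (PP n j) = [j]" by (simp_all add: PP_def)
lemma take2: "take 2 (PP n j) = [j, n]" by (simp add: PP_def numeral_2_eq_2)

lemma rank2_x: "x < n \<Longrightarrow> rank n (PP n) 2 x = 1"
proof -
  assume "x < n"
  then have "{j \<in> {0..<n}. x \<in> set (take 2 (PP n j))} = {x}" by (auto simp: take2)
  thus ?thesis by (simp add: rank_def)
qed

lemma rank2_n: "rank n (PP n) 2 n = n"
proof -
  have "{j \<in> {0..<n}. n \<in> set (take 2 (PP n j))} = {0..<n}" by (auto simp: take2)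
  thus ?thesis by (simp add: rank_def)
qed

lemma rank1_n: "rank n (PP n) 1 n = 0"
proof -
  have "{j \<in> {0..<n}. n \<in> set (take 1 (PP n j))} = {}" by (auto simp: take1)
  thus ?thesis by (simp add: rank_def)
qed

lemma rank1_0: "n \<ge> 1 \<Longrightarrow> rank n (PP n) 1 0 = 1"
proof -
  assume "n \<ge> 1"
  then have "{j \<in> {0..<n}. 0 \<in> set (take 1 (PP n j))} = {0}" by (auto simp: take1)
  thus ?thesis by (simp add: rank_def)
qed

lemma maxrank_ge: "y < m \<Longrightarrow> rank n P i y \<le> maxrank n m P i"
  unfolding maxrank_def by (rule Max_ge) auto

lemma main:
  assumes "n \<ge> 1" "x < n + 1" "\<alpha> > 0" "has_factor n (n+1) (PP n) x \<alpha>"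
  shows "\<alpha> \<ge> real n"
proof (cases "x < n")
  case True
  have "real (rank n (PP n) 2 x) \<ge> real (maxrank n (n+1) (PP n) 2) / \<alpha>"
    using assms(1,4) unfolding has_factor_def by auto
  moreover have "maxrank n (n+1) (PP n) 2 \<ge> n" using maxrank_ge[of n "n+1" n "PP n" 2] rank2_n by simp
  ultimately have "1 \<ge> real n / \<alpha>" using rank2_x[OF True]
    by (smt (verit, best) assms(3) divide_right_mono of_nat_le_iff of_nat_1)
  thus ?thesis using assms(3) by (simp add: field_simps)
next
  case False
  then have x: "x = n" using assms(2) by simp
  have "real (rank n (PP n) 1 x) \<ge> real (maxrank n (n+1) (PP n) 1) / \<alpha>"
    using assms(1,4) unfolding has_factor_def by auto
  moreover have "maxrank n (n+1) (PP n) 1 \<ge> 1" using maxrank_ge[of 0 "n+1" n "PP n" 1] rank1_0[OF assms(1)] by simp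
  ultimately have "0 \<ge> 1 / \<alpha>" using rank1_n x
    by (smt (verit, best) assms(3) divide_right_mono of_nat_le_iff of_nat_1 of_nat_0)
  thus ?thesis using assms(3) by simp
qed

theorem theorem15:
  fixes n :: nat
  assumes "n \<ge> 1"
  shows "(\<exists>P. valid_profile n (n + 1) P \<and>
            (\<forall>x<n + 1. \<forall>\<alpha>>0. has_factor n (n + 1) P x \<alpha>
                 \<longrightarrow> \<alpha> \<ge> real (min n (n + 1 - 1))))
       \<and> (\<forall>M. (\<forall>P. valid_profile n (n + 1) P \<longrightarrow> M P < n + 1) \<longrightarrow>
            (\<forall>\<alpha>>0. mech_has_factor n (n + 1) M \<alpha> \<longrightarrow> \<alpha> \<ge> real (min n (n + 1 - 1))))"
proof
  show "\<exists>P. valid_profile n (n + 1) P \<and>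
            (\<forall>x<n + 1. \<forall>\<alpha>>0. has_factor n (n + 1) P x \<alpha>
                 \<longrightarrow> \<alpha> \<ge> real (min n (n + 1 - 1)))"
    using PP_valid main[OF assms] by auto
next
  show "\<forall>M. (\<forall>P. valid_profile n (n + 1) P \<longrightarrow> M P < n + 1) \<longrightarrow>
            (\<forall>\<alpha>>0. mech_has_factor n (n + 1) M \<alpha> \<longrightarrow> \<alpha> \<ge> real (min n (n + 1 - 1)))"
  proof (intro allI impI)
    fix M and \<alpha> :: real
    assume h: "\<forall>P. valid_profile n (n + 1) P \<longrightarrow> M P < n + 1" "\<alpha> > 0" "mech_has_factor n (n + 1) M \<alpha>"
    then have "has_factor n (n+1) (PP n) (M (PP n)) \<alpha>" "M (PP n) < n + 1"
      using PP_valid unfolding mech_has_factor_def by auto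
    thus "\<alpha> \<ge> real (min n (n + 1 - 1))" using main[OF assms _ h(2)] by simp
  qed
qed

end
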